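(* If $t\in[0,1/2]$, then $w(t,a)/W(t,a)\le \frac{68-5\sqrt{10}}{72}$ for all $a\in[(3t+2)/4,2]$.
   Context: For $(t,a)\in\mathbb R^2$ define $w_1(t,a)=(2t+3)a-(3t^2/4+t)$, $w_2(t,a)=(4t+4)a-(3t^2/2+2t+2)$, $w_3(t,a)=8ta-(3t^2+4t-4)$, $W(t,a)=[(t+2)a-(t^2/2+t)](t+2)$, and $w(t,a)=\min\{w_1(t,a),w_2(t,a),w_3(t,a)\}$. *)

theory Defs
  imports Complex_Main
begin

definition w1 :: "real \<Rightarrow> real \<Rightarrow> real" where
  "w1 t a = (2*t + 3) * a - (3*t^2/4 + t)"

definition w2 :: "real \<Rightarrow> real \<Rightarrow> real" where
  "w2 t a = (4*t + 4) * a - (3*t^2/2 + 2*t + 2)"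

definition w3 :: "real \<Rightarrow> real \<Rightarrow> real" where
  "w3 t a = 8*t*a - (3*t^2 + 4*t - 4)"

definition W :: "real \<Rightarrow> real \<Rightarrow> real" where
  "W t a = ((t + 2) * a - (t^2/2 + t)) * (t + 2)"

definition w :: "real \<Rightarrow> real \<Rightarrow> real" where
  "w t a = min (w1 t a) (min (w2 t a) (w3 t a))"

end

theory Submission
  imports Defs
begin

lemma K_id:
  fixes s t :: real
  shows "32 - (9*t^2-28*t+4) - ((68-5*s)/72)*((t+2)*(20+4*t-3*t^2))
     = (t - (14-4*s)/9) * ((58/9 + s/18) + (-16/9 - 31*s/18)*t + (17/6 - 5*s/24)*t^2)
       - (4/9)*(1/18 - 31*t/18 - 5*t^2/24)*(s^2-10)"
  by (simp add: field_simps power2_eq_square)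

lemma P_id:
  fixes s t a :: real
  shows "(4*t+4 - ((68-5*s)/72)*(t+2)^2) * ((2*t+3)*a - (3*t^2/4+t) - ((68-5*s)/72)*(((t+2)*a - (t^2/2+t))*(t+2)))
       - (2*t+3 - ((68-5*s)/72)*(t+2)^2) * ((4*t+4)*a - (3*t^2/2+2*t+2) - ((68-5*s)/72)*(((t+2)*a - (t^2/2+t))*(t+2)))
     = (t - (14-4*s)/9) * ((-1/9 - 7*s/18) + (5/6 - 11*s/24)*t + (11/12 - s/6)*t^2 + (17/72 - 5*s/288)*t^3)
      + (s^2-10)*(14/81 + 11*t/54 + 2*t^2/27 + 5*t^3/648)"
  by (simp add: field_simps power2_eq_square power3_eq_cube)

lemma s_lo: "3162/1000 < sqrt (10::real)"
  by (rule real_less_rsqrt) (simp add: power2_eq_square)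

lemma s_hi: "sqrt (10::real) < 3163/1000"
  by (rule real_less_lsqrt) (simp_all add: power2_eq_square)

lemma Qk_pos:
  fixes s t :: real
  assumes "3162/1000 < s" "s < 3163/1000" "0 \<le> t" "9*t \<le> 14 - 4*s"
  shows "0 < (58/9 + s/18) + (-16/9 - 31*s/18)*t + (17/6 - 5*s/24)*t^2"
proof -
  have "s*t \<le> (3163/1000)*t" using assms by (intro mult_right_mono) auto
  moreover have "0 \<le> (17/6 - 5*s/24)*t^2" using assms by (intro mult_nonneg_nonneg) auto
  ultimately show ?thesis using assms by (simp add: algebra_simps)
qed

lemma Qp_neg:
  fixes s t :: real
  assumes "3162/1000 < s" "s < 3163/1000" "0 \<le> t" "t \<le> 1/2"
  shows "(-1/9 - 7*s/18) + (5/6 - 11*s/24)*t + (11/12 - s/6)*t^2 + (17/72 - 5*s/288)*t^3 < 0"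
proof -
  have "(5/6 - 11*s/24)*t \<le> 0" using assms by (intro mult_nonpos_nonneg) auto
  moreover have "t^2 \<le> 1/4"
  proof -
    have "t^2 \<le> (1/2)^2" using assms by (intro power_mono) auto
    then show ?thesis by (simp add: power2_eq_square)
  qed
  moreover have "t^3 \<le> 1/8"
  proof -
    have "t^3 \<le> (1/2)^3" using assms by (intro power_mono) auto
    then show ?thesis by (simp add: power3_eq_cube)
  qed
  ultimately have a: "(11/12 - s/6)*t^2 \<le> (11/12 - s/6)*(1/4)"
       and b: "(17/72 - 5*s/288)*t^3 \<le> (17/72 - 5*s/288)*(1/8)"
       and c: "(5/6 - 11*s/24)*t \<le> 0"
    using assms by (auto intro!: mult_left_mono)
  have a': "(11/12 - s/6)*t^2 \<le> 11/48 - s/24" using a by simp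
  have b': "(17/72 - 5*s/288)*t^3 \<le> 17/576 - 5*s/2304" using b by simp
  show ?thesis using a' b' c assms by linarith
qed

theorem lemmaA8:
  fixes t a :: real
  assumes "0 \<le> t" and "t \<le> 1/2"
    and "(3*t + 2)/4 \<le> a" and "a \<le> 2"
  shows "w t a / W t a \<le> (68 - 5 * sqrt 10) / 72"
proof -
  define s where "s = sqrt (10::real)"
  define c where "c = (68 - 5*s)/72"
  have s2: "s^2 = 10" unfolding s_def by simp
  have sl: "3162/1000 < s" and sh: "s < 3163/1000" unfolding s_def using s_lo s_hi by auto
  have cl: "c \<ge> 7247/10000" and ch: "c \<le> 7249/10000" unfolding c_def using sl sh by auto
  have Wpos: "0 < W t a"
  proof -
    have "(t+2)*((3*t + 2)/4) \<le> (t+2)*a" using assms by (intro mult_left_mono) auto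
    moreover have "(t+2)*a - (t^2/2+t) = ((t+2)*a - (t+2)*((3*t+2)/4)) + (t+2)^2/4"
      by (simp add: algebra_simps power2_eq_square)
    moreover have "0 < (t+2)^2/4" using assms by simp
    ultimately have "0 < (t+2)*a - (t^2/2+t)" by linarith
    then show ?thesis unfolding W_def using assms by simp
  qed
  have key: "w1 t a \<le> c * W t a \<or> w2 t a \<le> c * W t a \<or> w3 t a \<le> c * W t a"
  proof (cases "9*t \<le> 14 - 4*s")
    case True
    define Kv where "Kv = 32 - (9*t^2-28*t+4) - c*((t+2)*(20+4*t-3*t^2))"
    have "Kv = (t - (14-4*s)/9) * ((58/9 + s/18) + (-16/9 - 31*s/18)*t + (17/6 - 5*s/24)*t^2)"
      unfolding Kv_def c_def using K_id[where s=s and t=t] s2 by simp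
    moreover have "0 < (58/9 + s/18) + (-16/9 - 31*s/18)*t + (17/6 - 5*s/24)*t^2"
      using Qk_pos[OF sl sh assms(1) True] .
    moreover have "t - (14-4*s)/9 \<le> 0" using True by simp
    ultimately have Kneg: "Kv \<le> 0" by (simp add: mult_nonpos_nonneg)
    show ?thesis
    proof (cases "a \<le> 5/3")
      case True
      have A2: "0 \<le> 4*t+4 - c*(t+2)^2"
      proof -
        have "t*t \<le> t*(1/2)" using assms by (intro mult_left_mono) auto
        then have "t^2 \<le> t/2" by (simp add: power2_eq_square)
        then have "c*(t+2)^2 \<le> c*(9/2*t+4)" using cl
          by (intro mult_left_mono) (auto simp: power2_eq_square algebra_simps)
        moreover have "c*t \<le> (73/100)*t" using ch assms by (intro mult_right_mono) auto
        ultimately show ?thesis using cl ch assms by (simp add: algebra_simps) 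
      qed
      have eq: "w2 t a - c * W t a = Kv/6 + (4*t+4 - c*(t+2)^2)*(a-5/3)"
        unfolding w2_def W_def Kv_def by (simp add: field_simps power2_eq_square)
      have "(4*t+4 - c*(t+2)^2)*(a-5/3) \<le> 0" using A2 True by (intro mult_nonneg_nonpos) auto
      then have "w2 t a \<le> c * W t a" using eq Kneg by linarith
      then show ?thesis by simp
    next
      case False
      have A3: "8*t - c*(t+2)^2 \<le> 0"
      proof -
        have "c*(4*t+4) \<le> c*(t+2)^2" using cl
          by (intro mult_left_mono) (auto simp: power2_eq_square algebra_simps)
        then have "4*(c*t) + 4*c \<le> c*(t+2)^2" by (simp add: algebra_simps)
        moreover have "(7247/10000)*t \<le> c*t" using cl assms by (intro mult_right_mono) auto
        ultimately show ?thesis using cl ch assms by linarith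
      qed
      have q: "0 \<le> 9*t^2-28*t+4"
      proof -
        have "9*(9*t^2-28*t+4) = (9*t - 14 + 4*s)*(9*t-14-4*s)"
          using s2 by (simp add: algebra_simps power2_eq_square)
        moreover have "0 \<le> (9*t - 14 + 4*s)*(9*t-14-4*s)"
          using \<open>9*t \<le> 14 - 4*s\<close> sl by (intro mult_nonpos_nonpos) auto
        ultimately show ?thesis by simp
      qed
      have eq: "w3 t a - c * W t a = (Kv - (9*t^2-28*t+4))/6 + (8*t - c*(t+2)^2)*(a-5/3)"
        unfolding w3_def W_def Kv_def by (simp add: field_simps power2_eq_square)
      have "(8*t - c*(t+2)^2)*(a-5/3) \<le> 0" using A3 False by (intro mult_nonpos_nonneg) auto
      moreover have "(Kv - (9*t^2-28*t+4))/6 \<le> 0" by (rule divide_nonpos_pos) (use Kneg q in linarith, simp)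
      ultimately have "w3 t a \<le> c * W t a" using eq by linarith
      then show ?thesis by simp
    qed
  next
    case False
    show ?thesis
    proof (rule ccontr)
      assume "\<not> ?thesis"
      then have g1: "0 < w1 t a - c * W t a" and g2: "0 < w2 t a - c * W t a" by auto
      have tl: "1497/10000 \<le> t" using False sh by linarith
      have A1: "2*t+3 - c*(t+2)^2 \<le> 0"
      proof -
        have "c*(4*t+4) \<le> c*(t+2)^2" using cl
          by (intro mult_left_mono) (auto simp: power2_eq_square algebra_simps)
        then have "4*(c*t) + 4*c \<le> c*(t+2)^2" by (simp add: algebra_simps)
        moreover have "(7247/10000)*t \<le> c*t" using cl assms by (intro mult_right_mono) auto
        ultimately show ?thesis using cl ch assms tl by linarith
      qed
      have A2: "0 \<le> 4*t+4 - c*(t+2)^2"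
      proof -
        have "t*t \<le> t*(1/2)" using assms by (intro mult_left_mono) auto
        then have "t^2 \<le> t/2" by (simp add: power2_eq_square)
        then have "c*(t+2)^2 \<le> c*(9/2*t+4)" using cl
          by (intro mult_left_mono) (auto simp: power2_eq_square algebra_simps)
        moreover have "c*t \<le> (73/100)*t" using ch assms by (intro mult_right_mono) auto
        ultimately show ?thesis using cl ch assms by (simp add: algebra_simps)
      qed
      have A2': "0 < 4*t+4 - c*(t+2)^2"
      proof -
        have "t*t \<le> t*(1/2)" using assms by (intro mult_left_mono) auto
        then have "t^2 \<le> t/2" by (simp add: power2_eq_square)
        then have "c*(t+2)^2 \<le> c*(9/2*t+4)" using cl
          by (intro mult_left_mono) (auto simp: power2_eq_square algebra_simps)
        moreover have "c*t \<le> (73/100)*t" using ch assms by (intro mult_right_mono) auto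
        ultimately show ?thesis using cl ch assms by (simp add: algebra_simps)
      qed
      have "0 < (4*t+4 - c*(t+2)^2) * (w1 t a - c * W t a)" using A2' g1 by simp
      moreover have "0 \<le> - (2*t+3 - c*(t+2)^2) * (w2 t a - c * W t a)" using A1 g2
        by (intro mult_nonneg_nonneg) auto
      ultimately have pos: "0 < (4*t+4 - c*(t+2)^2) * (w1 t a - c * W t a) - (2*t+3 - c*(t+2)^2) * (w2 t a - c * W t a)"
        by linarith
      have "(4*t+4 - c*(t+2)^2) * (w1 t a - c * W t a) - (2*t+3 - c*(t+2)^2) * (w2 t a - c * W t a)
          = (t - (14-4*s)/9) * ((-1/9 - 7*s/18) + (5/6 - 11*s/24)*t + (11/12 - s/6)*t^2 + (17/72 - 5*s/288)*t^3)"
        using P_id[where s=s and t=t and a=a] s2 unfolding w1_def w2_def W_def c_def by simp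
      moreover have "(t - (14-4*s)/9) * ((-1/9 - 7*s/18) + (5/6 - 11*s/24)*t + (11/12 - s/6)*t^2 + (17/72 - 5*s/288)*t^3) \<le> 0"
        using Qp_neg[OF sl sh assms(1,2)] False by (intro mult_nonneg_nonpos) auto
      ultimately show False using pos by linarith
    qed
  qed
  have "w t a \<le> c * W t a" using key unfolding w_def by auto
  then show ?thesis using Wpos unfolding c_def[symmetric] s_def[symmetric]
    by (simp add: pos_divide_le_eq mult.commute)
qed

end
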